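(* Let $f:[0,1]\to[0,1]$ be a continuous map with a unique fixed point $a$, and let $P$ be a (non-fixed) periodic orbit of $f$ with over-rotation pair $(p,q)$ and code $L$. If there exist $u,v\in P$, $u\ne v$, with $u>_a v$ and $L(u)=L(v)$, then $p$ and $q$ are not coprime.
   Context: For a continuous interval map $f$ and a periodic orbit $P$ of period $q$ which is not a fixed point, let $2p$ be the number of points $x\in P$ such that $f(x)-x$ and $f^2(x)-f(x)$ have different signs; the over-rotation pair of $P$ is $(p,q)$ and its over-rotation number is $\rho(P)=p/q$. Write $x>_a y$ if $x<y<a$ or $x>y>a$. Code: let $\rho=\rho(P)$ and $\varphi:P\to\{0,1\}$, $\varphi(y)=1$ if $y>a$ and $f(y)<a$, $\varphi(y)=0$ otherwise. The code of $P$ is $L:P\to\mathbb{R}$ with $L(x_0)=0$ for the leftmost point $x_0$ of $P$ and $L(f(y))=L(y)+\rho-\varphi(y)$ for $y\in P$. *)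

theory Defs
  imports "HOL-Analysis.Analysis"
begin

definition periodic_pt :: "(real \<Rightarrow> real) \<Rightarrow> real \<Rightarrow> nat \<Rightarrow> bool" where
  "periodic_pt f x q \<longleftrightarrow> q > 0 \<and> (f ^^ q) x = x \<and> (\<forall>k. 0 < k \<and> k < q \<longrightarrow> (f ^^ k) x \<noteq> x)"

definition orbit :: "(real \<Rightarrow> real) \<Rightarrow> real \<Rightarrow> real set" where
  "orbit f x = {(f ^^ n) x | n. True}"

definition sign_changes :: "(real \<Rightarrow> real) \<Rightarrow> real set \<Rightarrow> nat" where
  "sign_changes f P = card {x \<in> P. (f x - x) * (f (f x) - f x) < 0}"

definition over_rotation_pair :: "(real \<Rightarrow> real) \<Rightarrow> real set \<Rightarrow> nat \<times> nat" where
  "over_rotation_pair f P = (sign_changes f P div 2, card P)"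

definition over_rotation_number :: "(real \<Rightarrow> real) \<Rightarrow> real set \<Rightarrow> real" where
  "over_rotation_number f P = real (fst (over_rotation_pair f P)) / real (snd (over_rotation_pair f P))"

definition gt_at :: "real \<Rightarrow> real \<Rightarrow> real \<Rightarrow> bool" where
  "gt_at a x y \<longleftrightarrow> (x < y \<and> y < a) \<or> (x > y \<and> y > a)"

definition phi :: "(real \<Rightarrow> real) \<Rightarrow> real \<Rightarrow> real \<Rightarrow> real" where
  "phi f a y = (if y > a \<and> f y < a then 1 else 0)"

definition is_code :: "(real \<Rightarrow> real) \<Rightarrow> real \<Rightarrow> real set \<Rightarrow> (real \<Rightarrow> real) \<Rightarrow> bool" where
  "is_code f a P L \<longleftrightarrow> L (Min P) = 0 \<and>
     (\<forall>y \<in> P. L (f y) = L y + over_rotation_number f P - phi f a y)"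

end

theory Submission
  imports Defs
begin

theorem lemma2p2:
  fixes f :: "real \<Rightarrow> real" and a x :: real and q p :: nat and L :: "real \<Rightarrow> real"
    and P :: "real set" and u v :: real
  assumes cont: "continuous_on {0..1} f"
    and maps: "f ` {0..1} \<subseteq> {0..1}"
    and fix_a: "a \<in> {0..1}" "f a = a"
    and uniq: "\<forall>y \<in> {0..1}. f y = y \<longrightarrow> y = a"
    and x01: "x \<in> {0..1}"
    and per: "periodic_pt f x q" and notfix: "q \<noteq> 1"
    and P_def: "P = orbit f x"
    and pair: "over_rotation_pair f P = (p, q)"
    and code: "is_code f a P L"
    and uv: "u \<in> P" "v \<in> P" "u \<noteq> v" "gt_at a u v" "L u = L v"
  shows "\<not> coprime p q"
proof
  assume cop: "coprime p q"
  have q0: "q > 0" and xq: "(f ^^ q) x = x" using per unfolding periodic_pt_def by auto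
  have cardP: "card P = q" using pair unfolding over_rotation_pair_def by simp
  have rho: "over_rotation_number f P = real p / real q"
    using pair unfolding over_rotation_number_def by simp
  have Pmem: "y \<in> P \<longleftrightarrow> (\<exists>n. y = (f ^^ n) x)" for y
    unfolding P_def orbit_def by auto
  have Psub: "P \<subseteq> (\<lambda>n. (f ^^ n) x) ` {..<q}"
  proof
    fix y assume "y \<in> P"
    then obtain n where "y = (f ^^ n) x" using Pmem by auto
    then have "y = (f ^^ (n mod q)) x" using funpow_mod_eq[where f=f and n=q and x=x and m=n] xq by simp
    then show "y \<in> (\<lambda>n. (f ^^ n) x) ` {..<q}" using q0 by auto
  qed
  have finP: "finite P" using finite_subset[OF Psub] by auto
  have neP: "P \<noteq> {}" using uv by auto
  define x0 where "x0 = Min P"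
  have x0P: "x0 \<in> P" using finP neP x0_def by simp
  have perP: "(f ^^ q) z = z" if zP: "z \<in> P" for z
  proof -
    obtain n where z: "z = (f ^^ n) x" using Pmem zP by auto
    have "(f ^^ q) z = (f ^^ (q + n)) x" by (simp add: z funpow_add)
    also have "\<dots> = (f ^^ (n + q)) x" by (simp add: add.commute)
    also have "\<dots> = z" by (simp add: z funpow_add xq)
    finally show ?thesis .
  qed
  have fP: "f z \<in> P" if zP: "z \<in> P" for z
  proof -
    obtain n where z: "z = (f ^^ n) x" using Pmem zP by auto
    have "f z = (f ^^ Suc n) x" by (simp add: z)
    then show ?thesis using Pmem by blast
  qed
  have iterP: "(f ^^ n) z \<in> P" if "z \<in> P" for z n
    using that by (induction n) (auto intro: fP)
  obtain m where m: "x0 = (f ^^ m) x" using Pmem x0P by auto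
  have fromx0: "\<exists>n<q. y = (f ^^ n) x0" if yP: "y \<in> P" for y
  proof -
    obtain n where y: "y = (f ^^ n) x" using Pmem yP by auto
    have xqk: "(f ^^ (q * k)) x = x" for k
      using funpow_mod_eq[where f=f and n=q and x=x and m="q*k"] xq by simp
    have "y = (f ^^ n) ((f ^^ (q * m)) x)" using y xqk by simp
    also have "\<dots> = (f ^^ (n + q*m)) x" by (simp add: funpow_add)
    also have "n + q*m = n + q*m - m + m" using q0 by (cases q) auto
    then have "(f ^^ (n + q*m)) x = (f ^^ (n + q*m - m + m)) x" by simp
    also have "\<dots> = (f ^^ (n + q*m - m)) x0" by (simp add: funpow_add m)
    also have "\<dots> = (f ^^ ((n + q*m - m) mod q)) x0"
      using funpow_mod_eq[where f=f and n=q and x=x0] perP[OF x0P] by simp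
    finally have "y = (f ^^ ((n + q*m - m) mod q)) x0" .
    moreover have "(n + q*m - m) mod q < q" using q0 by simp
    ultimately show ?thesis by blast
  qed
  define r where "r = real p / real q"
  have rho': "over_rotation_number f P = r" using rho r_def by simp
  have Lx': "\<exists>k::int. L ((f ^^ n) x0) = real n * r - of_int k" for n
  proof (induction n)
    case 0
    then show ?case using code x0_def unfolding is_code_def by (intro exI[of _ 0]) simp
  next
    case (Suc n)
    then obtain k where k: "L ((f ^^ n) x0) = real n * r - of_int k" by auto
    have mem: "(f ^^ n) x0 \<in> P" using iterP x0P by blast
    have "L ((f ^^ Suc n) x0) = L ((f ^^ n) x0) + r - phi f a ((f ^^ n) x0)"
      using code mem rho' unfolding is_code_def by simp
    also have "\<dots> = real (Suc n) * r
        - of_int (k + (if (f ^^ n) x0 > a \<and> f ((f ^^ n) x0) < a then 1 else 0))"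
      using k unfolding phi_def of_nat_Suc by (cases "(f ^^ n) x0 > a \<and> f ((f ^^ n) x0) < a") (simp_all add: ring_distribs)
    finally show ?case by blast
  qed
  have Lx: "\<exists>k::int. L ((f ^^ n) x0) = real n * (real p / real q) - of_int k" for n
    using Lx'[of n] r_def by simp
  obtain i where i: "i < q" "u = (f ^^ i) x0" using fromx0 uv(1) by blast
  obtain j where j: "j < q" "v = (f ^^ j) x0" using fromx0 uv(2) by blast
  obtain k1 where k1: "L u = real i * (real p / real q) - of_int k1" using Lx i by blast
  obtain k2 where k2: "L v = real j * (real p / real q) - of_int k2" using Lx j by blast
  have "real i * (real p / real q) - of_int k1 = real j * (real p / real q) - of_int k2"
    using k1 k2 uv(5) by simp
  then have "real i * real p - real q * of_int k1 = real j * real p - real q * of_int k2"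
    using q0 by (simp add: field_simps)
  then have "of_int ((int i - int j) * int p) = (of_int (int q * (k1 - k2)) :: real)"
    by (simp add: algebra_simps)
  then have eq: "(int i - int j) * int p = int q * (k1 - k2)" by linarith
  have "int q dvd (int i - int j) * int p" using eq by simp
  moreover have "coprime (int q) (int p)" using cop by (simp add: coprime_commute)
  ultimately have "int q dvd (int i - int j)" using coprime_dvd_mult_left_iff by blast
  then have "int i - int j = 0" proof -
    assume d: "int q dvd (int i - int j)"
    have "\<bar>int i - int j\<bar> < int q" using i(1) j(1) by linarith
    show ?thesis
    proof (rule ccontr)
      assume "int i - int j \<noteq> 0"
      then have "\<bar>int q\<bar> \<le> \<bar>int i - int j\<bar>" using dvd_imp_le_int d by blast
      then show False using \<open>\<bar>int i - int j\<bar> < int q\<close> by simp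
    qed
  qed
  then have "i = j" by simp
  then show False using i j uv(3) by simp
qed

end
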